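(* Let $X$ be a graph with bounded geometry and let $\phi:X\to G$ be an injective $(a,b)$-rough isometry to a Cayley graph $(G,S)$ of a group of polynomial volume growth. Then there exist constants $0<C_1<1$, $C_2>0$ and $R_1$ such that for all $y\in G$ and $p\in X$ with $d^S(\phi(p),y)\leq b$, and all $R\geq R_1$, $$|B_p^X(R)|\geq C_2\,|B_y^G(C_1R)|.$$
   Context: Graphs are connected, locally finite, without self-loops or multiple edges; $d^X$ is the path-length metric on $X$; bounded geometry means all vertex degrees are at most some $\Delta$. For a group $G$ with finite symmetric generating set $S$, the Cayley graph has $x\sim y$ iff $x=ys$ for some $s\in S$, with word metric $d^S$. $G$ has polynomial volume growth if $|B^G_e(n)|\leq Cn^A$ for some $C,A>0$ and all $n\geq1$. $B_p^X(R)=\{x\in X:d^X(x,p)\leq R\}$, $B_y^G(R)=\{z\in G:d^S(z,y)\leq R\}$, and $|\cdot|$ denotes cardinality. An $(a,b)$-rough isometry ($a\geq 1,b\geq0$) is a map $\phi$ with $a^{-1}d^X(x,y)-b\leq d^S(\phi(x),\phi(y))\leq a\,d^X(x,y)+b$ for all $x,y\in X$ and $d^S(z,\phi(X))\leq b$ for all $z\in G$. *)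

theory Defs
  imports Complex_Main "HOL-Algebra.Generated_Groups"
begin

definition walk_of_length :: "('v \<Rightarrow> 'v \<Rightarrow> bool) \<Rightarrow> 'v \<Rightarrow> 'v \<Rightarrow> nat \<Rightarrow> bool" where
  "walk_of_length E x y n \<longleftrightarrow>
     (\<exists>f :: nat \<Rightarrow> 'v. f 0 = x \<and> f n = y \<and> (\<forall>i<n. E (f i) (f (Suc i))))"

definition graph_dist :: "('v \<Rightarrow> 'v \<Rightarrow> bool) \<Rightarrow> 'v \<Rightarrow> 'v \<Rightarrow> nat" where
  "graph_dist E x y = (LEAST n. walk_of_length E x y n)"

definition graph :: "('v \<Rightarrow> 'v \<Rightarrow> bool) \<Rightarrow> bool" where
  "graph E \<longleftrightarrow> (\<forall>x y. E x y \<longrightarrow> E y x) \<and> (\<forall>x. \<not> E x x)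
     \<and> (\<forall>x. finite {y. E x y}) \<and> (\<forall>x y. \<exists>n. walk_of_length E x y n)"

definition bounded_geometry :: "('v \<Rightarrow> 'v \<Rightarrow> bool) \<Rightarrow> bool" where
  "bounded_geometry E \<longleftrightarrow> (\<exists>\<Delta>::nat. \<forall>x. card {y. E x y} \<le> \<Delta>)"

definition graph_ball :: "('v \<Rightarrow> 'v \<Rightarrow> bool) \<Rightarrow> 'v \<Rightarrow> real \<Rightarrow> 'v set" where
  "graph_ball E p R = {x. real (graph_dist E x p) \<le> R}"

definition fin_sym_gen_set :: "('g, 'b) monoid_scheme \<Rightarrow> 'g set \<Rightarrow> bool" where
  "fin_sym_gen_set G S \<longleftrightarrow> S \<subseteq> carrier G \<and> finite S \<and> (\<forall>s\<in>S. inv\<^bsub>G\<^esub> s \<in> S)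
     \<and> generate G S = carrier G"

definition cayley_adj :: "('g, 'b) monoid_scheme \<Rightarrow> 'g set \<Rightarrow> 'g \<Rightarrow> 'g \<Rightarrow> bool" where
  "cayley_adj G S x y \<longleftrightarrow> x \<in> carrier G \<and> y \<in> carrier G \<and> (\<exists>s\<in>S. x = y \<otimes>\<^bsub>G\<^esub> s)"

definition word_dist :: "('g, 'b) monoid_scheme \<Rightarrow> 'g set \<Rightarrow> 'g \<Rightarrow> 'g \<Rightarrow> nat" where
  "word_dist G S = graph_dist (cayley_adj G S)"

definition group_ball :: "('g, 'b) monoid_scheme \<Rightarrow> 'g set \<Rightarrow> 'g \<Rightarrow> real \<Rightarrow> 'g set" where
  "group_ball G S y R = {z \<in> carrier G. real (word_dist G S z y) \<le> R}"

definition polynomial_growth :: "('g, 'b) monoid_scheme \<Rightarrow> 'g set \<Rightarrow> bool" where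
  "polynomial_growth G S \<longleftrightarrow> (\<exists>C A::real. C > 0 \<and> A > 0 \<and>
     (\<forall>n::nat. n \<ge> 1 \<longrightarrow> real (card (group_ball G S \<one>\<^bsub>G\<^esub> (real n))) \<le> C * real n powr A))"

definition rough_isometry ::
  "('v \<Rightarrow> 'v \<Rightarrow> bool) \<Rightarrow> ('g, 'b) monoid_scheme \<Rightarrow> 'g set \<Rightarrow> real \<Rightarrow> real \<Rightarrow> ('v \<Rightarrow> 'g) \<Rightarrow> bool" where
  "rough_isometry E G S a b \<phi> \<longleftrightarrow> a \<ge> 1 \<and> b \<ge> 0 \<and> (\<forall>x. \<phi> x \<in> carrier G) \<and>
     (\<forall>x y. real (graph_dist E x y) / a - b \<le> real (word_dist G S (\<phi> x) (\<phi> y)) \<and>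
            real (word_dist G S (\<phi> x) (\<phi> y)) \<le> a * real (graph_dist E x y) + b) \<and>
     (\<forall>z\<in>carrier G. \<exists>x. real (word_dist G S z (\<phi> x)) \<le> b)"

end

theory Submission
  imports Defs
begin

lemma walk_rev:
  assumes sym: "\<And>x y. E x y \<Longrightarrow> E y x" and w: "walk_of_length E x y n"
  shows "walk_of_length E y x n"
proof -
  obtain f where f: "f 0 = x" "f n = y" "\<forall>i<n. E (f i) (f (Suc i))"
    using w unfolding walk_of_length_def by blast
  have "\<forall>i<n. E (f (n - i)) (f (n - Suc i))"
  proof (intro allI impI)
    fix i assume "i < n"
    then have "E (f (n - Suc i)) (f (Suc (n - Suc i)))" using f(3) by simp
    moreover have "Suc (n - Suc i) = n - i" using \<open>i<n\<close> by simp
    ultimately show "E (f (n - i)) (f (n - Suc i))" using sym by metis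
  qed
  then show ?thesis unfolding walk_of_length_def using f
    by (intro exI[of _ "\<lambda>i. f (n - i)"]) auto
qed

lemma walk_trans:
  assumes "walk_of_length E x y m" "walk_of_length E y z n"
  shows "walk_of_length E x z (m + n)"
proof -
  obtain f where f: "f 0 = x" "f m = y" "\<forall>i<m. E (f i) (f (Suc i))"
    using assms(1) unfolding walk_of_length_def by blast
  obtain g where g: "g 0 = y" "g n = z" "\<forall>i<n. E (g i) (g (Suc i))"
    using assms(2) unfolding walk_of_length_def by blast
  define h where "h i = (if i \<le> m then f i else g (i - m))" for i
  have h2: "h i = g (i - m)" if "i \<ge> m" for i
    using that f(2) g(1) by (cases "i = m") (auto simp: h_def)
  have "h 0 = x" using f by (simp add: h_def)
  moreover have "h (m + n) = z" using h2[of "m+n"] g by simp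
  moreover have "\<forall>i<m+n. E (h i) (h (Suc i))"
  proof (intro allI impI)
    fix i assume i: "i < m + n"
    show "E (h i) (h (Suc i))"
    proof (cases "i < m")
      case True then show ?thesis using f(3) by (simp add: h_def)
    next
      case False
      then have "h i = g (i - m)" "h (Suc i) = g (Suc (i - m))" using h2 by (auto simp: Suc_diff_le)
      then show ?thesis using g(3) i False by simp
    qed
  qed
  ultimately show ?thesis unfolding walk_of_length_def by blast
qed

lemma dist_le: "walk_of_length E x y n \<Longrightarrow> graph_dist E x y \<le> n"
  unfolding graph_dist_def by (rule Least_le)

lemma dist_walk: "walk_of_length E x y n \<Longrightarrow> walk_of_length E x y (graph_dist E x y)"
  unfolding graph_dist_def by (rule LeastI)

lemma dist_sym:
  assumes sym: "\<And>x y. E x y \<Longrightarrow> E y x" and w: "walk_of_length E x y n"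
  shows "graph_dist E x y = graph_dist E y x"
proof -
  have a: "walk_of_length E x y (graph_dist E x y)" using dist_walk[OF w] .
  have b: "walk_of_length E y x (graph_dist E y x)" using dist_walk[OF walk_rev[OF sym w]] .
  show ?thesis using dist_le[OF walk_rev[OF sym a]] dist_le[OF walk_rev[OF sym b]] by simp
qed

lemma dist_tri:
  assumes "walk_of_length E x y m" "walk_of_length E y z n"
  shows "graph_dist E x z \<le> graph_dist E x y + graph_dist E y z"
  using dist_le[OF walk_trans[OF dist_walk[OF assms(1)] dist_walk[OF assms(2)]]] .

lemma walkset_bound:
  assumes fin: "\<And>w. finite {x. E x w}" and D: "\<And>w. card {x. E x w} \<le> D"
  shows "finite {x. walk_of_length E x c n} \<and> card {x. walk_of_length E x c n} \<le> D ^ n"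
proof (induction n)
  case 0
  have "{x. walk_of_length E x c 0} = {c}" unfolding walk_of_length_def by auto
  then show ?case by simp
next
  case (Suc n)
  let ?W = "{x. walk_of_length E x c n}"
  have sub: "{x. walk_of_length E x c (Suc n)} \<subseteq> (\<Union>w\<in>?W. {x. E x w})"
  proof
    fix x assume "x \<in> {x. walk_of_length E x c (Suc n)}"
    then obtain f where f: "f 0 = x" "f (Suc n) = c" "\<forall>i<Suc n. E (f i) (f (Suc i))"
      unfolding walk_of_length_def by blast
    have "walk_of_length E (f 1) c n" unfolding walk_of_length_def
      using f by (intro exI[of _ "\<lambda>i. f (Suc i)"]) auto
    moreover have "E x (f 1)" using f by auto
    ultimately show "x \<in> (\<Union>w\<in>?W. {x. E x w})" by auto
  qed
  have fU: "finite (\<Union>w\<in>?W. {x. E x w})" using Suc fin by auto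
  have "card (\<Union>w\<in>?W. {x. E x w}) \<le> (\<Sum>w\<in>?W. card {x. E x w})" by (rule card_UN_le) (use Suc in auto)
  also have "\<dots> \<le> (\<Sum>w\<in>?W. D)" by (rule sum_mono) (rule D)
  also have "\<dots> = card ?W * D" by simp
  also have "\<dots> \<le> D ^ n * D" using Suc by simp
  finally have "card (\<Union>w\<in>?W. {x. E x w}) \<le> D ^ Suc n" by (simp add: mult.commute)
  then show ?case using sub fU card_mono finite_subset by (metis (no_types, lifting) le_trans)
qed

lemma ball_bound:
  assumes fin: "\<And>w. finite {x. E x w}" and D: "\<And>w. card {x. E x w} \<le> D"
    and conn: "\<And>x. x \<in> A \<Longrightarrow> \<exists>n. walk_of_length E x c n"
  shows "finite {x\<in>A. real (graph_dist E x c) \<le> r} \<and>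
         card {x\<in>A. real (graph_dist E x c) \<le> r} \<le> (\<Sum>k\<le>nat \<lfloor>r\<rfloor>. D ^ k)"
proof -
  let ?U = "\<Union>k\<le>nat \<lfloor>r\<rfloor>. {x. walk_of_length E x c k}"
  have sub: "{x\<in>A. real (graph_dist E x c) \<le> r} \<subseteq> ?U"
  proof
    fix x assume x: "x \<in> {x\<in>A. real (graph_dist E x c) \<le> r}"
    then obtain n where "walk_of_length E x c n" using conn by auto
    then have "walk_of_length E x c (graph_dist E x c)" by (rule dist_walk)
    moreover have "graph_dist E x c \<le> nat \<lfloor>r\<rfloor>" using x by (simp add: le_nat_floor)
    ultimately show "x \<in> ?U" by auto
  qed
  have fU: "finite ?U" using walkset_bound[OF fin D] by auto
  have "card ?U \<le> (\<Sum>k\<le>nat \<lfloor>r\<rfloor>. card {x. walk_of_length E x c k})" by (rule card_UN_le) simp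
  also have "\<dots> \<le> (\<Sum>k\<le>nat \<lfloor>r\<rfloor>. D ^ k)" by (rule sum_mono) (use walkset_bound[OF fin D] in auto)
  finally show ?thesis using sub fU card_mono finite_subset by (metis (no_types, lifting) le_trans)
qed


lemma walk_one: "E x y \<Longrightarrow> walk_of_length E x y 1"
  unfolding walk_of_length_def by (intro exI[of _ "\<lambda>i. if i = 0 then x else y"]) auto

lemma cay_sym:
  fixes G (structure)
  assumes G: "group G" and S: "fin_sym_gen_set G S" and a: "cayley_adj G S x y"
  shows "cayley_adj G S y x"
proof -
  interpret group G by fact
  obtain s where s: "s \<in> S" "x = y \<otimes> s" "x \<in> carrier G" "y \<in> carrier G"
    using a unfolding cayley_adj_def by blast
  have sc: "s \<in> carrier G" "inv s \<in> S" using S s unfolding fin_sym_gen_set_def by auto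
  have "y = x \<otimes> inv s" using s sc by (simp add: m_assoc)
  then show ?thesis using s sc unfolding cayley_adj_def by blast
qed

lemma cay_nb:
  assumes S: "fin_sym_gen_set G S"
  shows "finite {x. cayley_adj G S x w} \<and> card {x. cayley_adj G S x w} \<le> card S"
proof -
  have sub: "{x. cayley_adj G S x w} \<subseteq> (\<lambda>s. w \<otimes>\<^bsub>G\<^esub> s) ` S" unfolding cayley_adj_def by auto
  have f: "finite S" using S unfolding fin_sym_gen_set_def by auto
  show ?thesis using sub f card_image_le[OF f, of "\<lambda>s. w \<otimes>\<^bsub>G\<^esub> s"]
    by (meson card_mono finite_imageI finite_subset le_trans)
qed

lemma cay_conn:
  fixes G (structure)
  assumes G: "group G" and S: "fin_sym_gen_set G S"
    and x: "x \<in> carrier G" and c: "c \<in> carrier G"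
  shows "\<exists>n. walk_of_length (cayley_adj G S) x c n"
proof -
  interpret group G by fact
  have Sc: "S \<subseteq> carrier G" and gen: "generate G S = carrier G"
    using S unfolding fin_sym_gen_set_def by auto
  have step: "walk_of_length (cayley_adj G S) (c \<otimes> s) c 1" if "s \<in> S" "c \<in> carrier G" for s c
    by (rule walk_one) (use that Sc in \<open>auto simp: cayley_adj_def\<close>)
  have main: "\<forall>c\<in>carrier G. \<exists>n. walk_of_length (cayley_adj G S) (c \<otimes> g) c n"
    if "g \<in> generate G S" for g
    using that
  proof (induction g rule: generate.induct)
    case one
    then show ?case by (auto intro!: exI[of _ 0] simp: walk_of_length_def)
  next
    case (incl h)
    then show ?case using step by blast
  next
    case (inv h)
    then have "inv h \<in> S" using S unfolding fin_sym_gen_set_def by auto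
    then show ?case using step by blast
  next
    case (eng h1 h2)
    have h: "h1 \<in> carrier G" "h2 \<in> carrier G" using eng.hyps gen by auto
    show ?case
    proof
      fix c assume c: "c \<in> carrier G"
      obtain m where m: "walk_of_length (cayley_adj G S) (c \<otimes> h1 \<otimes> h2) (c \<otimes> h1) m"
        using eng.IH(2) c h by blast
      obtain n where n: "walk_of_length (cayley_adj G S) (c \<otimes> h1) c n"
        using eng.IH(1) c h by blast
      show "\<exists>n. walk_of_length (cayley_adj G S) (c \<otimes> (h1 \<otimes> h2)) c n"
        using walk_trans[OF m n] c h by (auto simp: m_assoc)
    qed
  qed
  have "inv c \<otimes> x \<in> generate G S" using gen x c by auto
  then obtain n where "walk_of_length (cayley_adj G S) (c \<otimes> (inv c \<otimes> x)) c n" using main c by blast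
  moreover have "c \<otimes> (inv c \<otimes> x) = x" using x c by (simp add: m_assoc[symmetric])
  ultimately show ?thesis by auto
qed

theorem lemma4p3:
  fixes E :: "'v \<Rightarrow> 'v \<Rightarrow> bool"
    and G :: "('g, 'b) monoid_scheme" and S :: "'g set"
    and \<phi> :: "'v \<Rightarrow> 'g" and a b :: real
  assumes "graph E" and "bounded_geometry E"
    and "group G" and "fin_sym_gen_set G S" and "polynomial_growth G S"
    and "rough_isometry E G S a b \<phi>" and "inj \<phi>"
  shows "\<exists>C1 C2 R1::real. 0 < C1 \<and> C1 < 1 \<and> C2 > 0 \<and>
    (\<forall>y\<in>carrier G. \<forall>p. real (word_dist G S (\<phi> p) y) \<le> b \<longrightarrow>
       (\<forall>R\<ge>R1. real (card (graph_ball E p R)) \<ge> C2 * real (card (group_ball G S y (C1 * R)))))"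
proof -
  note gr = assms(1) and G = assms(3) and S = assms(4) and ri = assms(6)
  have a1: "a \<ge> 1" and b0: "b \<ge> 0" and phic: "\<And>x. \<phi> x \<in> carrier G"
    and lo: "\<And>x y. real (graph_dist E x y) / a - b \<le> real (word_dist G S (\<phi> x) (\<phi> y))"
    and dense: "\<And>z. z \<in> carrier G \<Longrightarrow> \<exists>x. real (word_dist G S z (\<phi> x)) \<le> b"
    using ri unfolding rough_isometry_def by auto
  obtain D where D: "\<And>x. card {y. E x y} \<le> D" using assms(2) unfolding bounded_geometry_def by auto
  have Esym: "\<And>x y. E x y \<Longrightarrow> E y x" and Efin: "\<And>x. finite {y. E x y}"
    and Econn: "\<And>x y. \<exists>n. walk_of_length E x y n" using gr unfolding graph_def by auto
  have Eeq: "{x. E x w} = {x. E w x}" for w using Esym by auto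
  have Xfin: "finite (graph_ball E p R)" for p R
    using ball_bound[of E D UNIV p R] Efin D Econn unfolding Eeq graph_ball_def by auto
  define K where "K = (\<Sum>k\<le>nat \<lfloor>b\<rfloor>. card S ^ k)"
  have K1: "K \<ge> 1" unfolding K_def
    using member_le_sum[of 0 "{..nat \<lfloor>b\<rfloor>}" "\<lambda>k. card S ^ k"] by auto
  let ?A = "cayley_adj G S"
  have Gball: "finite (group_ball G S c r) \<and> card (group_ball G S c r) \<le> (\<Sum>k\<le>nat \<lfloor>r\<rfloor>. card S ^ k)"
    if c: "c \<in> carrier G" for c r
    using ball_bound[of ?A "card S" "carrier G" c r] cay_nb[OF S] cay_conn[OF G S _ c]
    unfolding group_ball_def word_dist_def by auto
  have wsym: "word_dist G S x z = word_dist G S z x" if "x \<in> carrier G" "z \<in> carrier G" for x z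
    unfolding word_dist_def using dist_sym[of ?A] cay_sym[OF G S] cay_conn[OF G S that] by metis
  have wtri: "word_dist G S x z \<le> word_dist G S x u + word_dist G S u z"
    if "x \<in> carrier G" "z \<in> carrier G" "u \<in> carrier G" for x z u
    unfolding word_dist_def using dist_tri[of ?A] cay_conn[OF G S] that by metis
  define C1 where "C1 = 1 / (2 * a)"
  define C2 where "C2 = 1 / real K"
  have C1: "0 < C1" "C1 < 1" using a1 unfolding C1_def by (auto simp: field_simps)
  have C2: "C2 > 0" using K1 unfolding C2_def by auto
  have main: "real (card (graph_ball E p R)) \<ge> C2 * real (card (group_ball G S y (C1 * R)))"
    if y: "y \<in> carrier G" and py: "real (word_dist G S (\<phi> p) y) \<le> b" and R: "R \<ge> 6 * a * b"
    for y p R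
  proof -
    define B where "B = group_ball G S y (C1 * R)"
    define g where "g z = (SOME x. real (word_dist G S z (\<phi> x)) \<le> b)" for z
    have gz: "real (word_dist G S z (\<phi> (g z))) \<le> b" if "z \<in> carrier G" for z
      unfolding g_def using someI_ex[OF dense[OF that]] .
    have Bfin: "finite B" unfolding B_def using Gball[OF y] by auto
    have gB: "g ` B \<subseteq> graph_ball E p R"
    proof
      fix x assume "x \<in> g ` B"
      then obtain z where z: "z \<in> B" "x = g z" by auto
      have zc: "z \<in> carrier G" and zy: "real (word_dist G S z y) \<le> C1 * R"
        using z unfolding B_def group_ball_def by auto
      have d1: "real (word_dist G S (\<phi> x) z) \<le> b" using gz[OF zc] z wsym[OF phic zc] by simp
      have d3: "real (word_dist G S y (\<phi> p)) \<le> b" using py wsym[OF phic y] by simp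
      have "word_dist G S (\<phi> x) (\<phi> p) \<le> word_dist G S (\<phi> x) z + word_dist G S z (\<phi> p)"
        using wtri phic zc by blast
      also have "\<dots> \<le> word_dist G S (\<phi> x) z + (word_dist G S z y + word_dist G S y (\<phi> p))"
        using wtri phic zc y by auto
      finally have "real (word_dist G S (\<phi> x) (\<phi> p)) \<le> b + C1 * R + b"
        using d1 d3 zy by linarith
      then have "real (graph_dist E x p) / a \<le> C1 * R + 3 * b" using lo[of x p] by linarith
      then have "real (graph_dist E x p) \<le> a * (C1 * R + 3 * b)" using a1 by (simp add: field_simps)
      also have "\<dots> = R / 2 + 3 * a * b" using a1 unfolding C1_def by (simp add: field_simps)
      also have "\<dots> \<le> R" using R by linarith
      finally show "x \<in> graph_ball E p R" unfolding graph_ball_def by simp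
    qed
    have Fb: "card (group_ball G S (\<phi> x) b) \<le> K" for x using Gball[OF phic] unfolding K_def by blast
    have Bsub: "B \<subseteq> (\<Union>x\<in>g ` B. group_ball G S (\<phi> x) b)"
    proof
      fix z assume z: "z \<in> B"
      then have zc: "z \<in> carrier G" unfolding B_def group_ball_def by auto
      then show "z \<in> (\<Union>x\<in>g ` B. group_ball G S (\<phi> x) b)"
        using z gz[OF zc] unfolding group_ball_def by auto
    qed
    have "card B \<le> card (\<Union>x\<in>g ` B. group_ball G S (\<phi> x) b)"
      by (rule card_mono[OF _ Bsub]) (use Bfin Gball phic in auto)
    also have "\<dots> \<le> (\<Sum>x\<in>g ` B. card (group_ball G S (\<phi> x) b))"
      by (rule card_UN_le) (use Bfin in auto)
    also have "\<dots> \<le> (\<Sum>x\<in>g ` B. K)" by (rule sum_mono) (rule Fb)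
    also have "\<dots> = card (g ` B) * K" by simp
    also have "\<dots> \<le> card (graph_ball E p R) * K" using card_mono[OF Xfin gB] by simp
    finally have "real (card B) \<le> real (card (graph_ball E p R)) * real K" by (simp flip: of_nat_mult)
    moreover have Kp: "real K > 0" using K1 by simp
    ultimately have "real (card B) / real K \<le> real (card (graph_ball E p R))"
      by (simp add: divide_le_eq)
    moreover have "C2 * real (card B) = real (card B) / real K" unfolding C2_def by simp
    ultimately show "real (card (graph_ball E p R)) \<ge> C2 * real (card (group_ball G S y (C1 * R)))"
      unfolding B_def by simp
  qed
  show ?thesis using main C1 C2 by blast
qed

end
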